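(* Let $G$ be a NOI-graph or a COI-graph on $n$ vertices. Then to each connected component $C_k$ of $G$ (isolated vertices included) corresponds a vector $\mathbf{v}_k\in\{-1,0,1\}^n$, supported on the vertex set of $C_k$, such that the vectors $\{\mathbf{v}_k\}$ form a basis of the kernel of the hybrid Laplacian $\mathcal{L}(G)$.
   Context: A hybrid graph $G=(V,E_L+E_Q)$ has a set $E_L$ of $L$-edges and a set $E_Q$ of $Q$-edges. Its hybrid Laplacian is $\mathcal{L}(G)=L(S_l)+Q(S_q)$ with $S_l=(V,E_L)$, $S_q=(V,E_Q)$, $L=D-A$ the signed Laplacian and $Q=D+A$ the signless Laplacian. Connected components are taken in the graph with all edges of both types. $G$ is a NOI-graph if $S_q$ is bipartite and no vertex is incident to both a $Q$-edge and an $L$-edge. $G$ is a COI-graph if $S_q$ is bipartite with a bipartition $(P_1,P_2)$ of $V$ (every $Q$-edge joining $P_1$ to $P_2$) such that every $L$-edge joins two vertices in the same part. *)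

theory Defs
  imports "HOL-Analysis.Analysis"
begin

text \<open>Vertices are the elements of a finite type 'n, so n = CARD('n).
  Edges are unordered pairs, i.e. 2-element vertex sets.
  El is the set of L-edges, Eq the set of Q-edges.\<close>

definition hybrid_graph :: "'n set set \<Rightarrow> 'n set set \<Rightarrow> bool" where
  "hybrid_graph El Eq \<longleftrightarrow> (\<forall>e \<in> El \<union> Eq. card e = 2)"

definition degree :: "'n set set \<Rightarrow> 'n \<Rightarrow> real" where
  "degree E i = real (card {e \<in> E. i \<in> e})"

definition adj_mat :: "'n set set \<Rightarrow> real^'n^'n" where
  "adj_mat E = (\<chi> i j. if {i, j} \<in> E then 1 else 0)"

definition deg_mat :: "'n set set \<Rightarrow> real^'n^'n" where
  "deg_mat E = (\<chi> i j. if i = j then degree E i else 0)"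

definition lap :: "('n::finite) set set \<Rightarrow> real^'n^'n" where
  "lap E = deg_mat E - adj_mat E"

definition signless_lap :: "('n::finite) set set \<Rightarrow> real^'n^'n" where
  "signless_lap E = deg_mat E + adj_mat E"

definition hybrid_laplacian :: "('n::finite) set set \<Rightarrow> 'n set set \<Rightarrow> real^'n^'n" where
  "hybrid_laplacian El Eq = lap El + signless_lap Eq"

definition bipartition :: "'n set set \<Rightarrow> 'n set \<Rightarrow> bool" where
  "bipartition E P1 \<longleftrightarrow> (\<forall>e \<in> E. \<exists>x y. e = {x, y} \<and> x \<in> P1 \<and> y \<notin> P1)"

definition bipartite :: "'n set set \<Rightarrow> bool" where
  "bipartite E \<longleftrightarrow> (\<exists>P1. bipartition E P1)"

definition NOI_graph :: "'n set set \<Rightarrow> 'n set set \<Rightarrow> bool" where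
  "NOI_graph El Eq \<longleftrightarrow> bipartite Eq \<and>
     \<not> (\<exists>v eq el. eq \<in> Eq \<and> el \<in> El \<and> v \<in> eq \<and> v \<in> el)"

text \<open>P1 and P2 = - P1 form a bipartition of V.\<close>
definition COI_graph :: "'n set set \<Rightarrow> 'n set set \<Rightarrow> bool" where
  "COI_graph El Eq \<longleftrightarrow> (\<exists>P1. bipartition Eq P1 \<and>
     (\<forall>e \<in> El. e \<subseteq> P1 \<or> e \<subseteq> - P1))"

definition connected_rel :: "'n set set \<Rightarrow> 'n set set \<Rightarrow> ('n \<times> 'n) set" where
  "connected_rel El Eq = {(x, y). \<exists>e \<in> El \<union> Eq. x \<in> e \<and> y \<in> e}\<^sup>*"

definition components :: "'n set set \<Rightarrow> 'n set set \<Rightarrow> 'n set set" where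
  "components El Eq = UNIV // connected_rel El Eq"

definition null_space :: "real^'n^'m \<Rightarrow> (real^'n) set" where
  "null_space A = {x. A *v x = 0}"

end

theory Submission
  imports Defs
begin

lemma deg_sum:
  fixes E :: "('n::finite) set set"
  assumes "\<forall>e\<in>E. card e = 2"
  shows "degree E i = (\<Sum>j\<in>UNIV. if {i,j}\<in>E then 1 else 0)"
proof -
  have "{e \<in> E. i \<in> e} = (\<lambda>j. {i,j}) ` {j. {i,j}\<in>E}"
  proof
    show "{e \<in> E. i \<in> e} \<subseteq> (\<lambda>j. {i,j}) ` {j. {i,j}\<in>E}"
    proof
      fix e assume e: "e \<in> {e \<in> E. i \<in> e}"
      then obtain a b where ab: "e = {a,b}" "a \<noteq> b" using assms card_2_iff by (metis (no_types, lifting) mem_Collect_eq)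
      show "e \<in> (\<lambda>j. {i,j}) ` {j. {i,j}\<in>E}"
      proof (cases "i = a")
        case True then show ?thesis using e ab by auto
      next
        case False then have "i = b" using e ab by auto
        then show ?thesis using e ab by (auto simp: insert_commute intro!: image_eqI[of _ _ a])
      qed
    qed
  qed auto
  moreover have "inj_on (\<lambda>j. {i,j}) {j. {i,j}\<in>E}"
    by (auto simp: inj_on_def doubleton_eq_iff)
  ultimately have "card {e \<in> E. i \<in> e} = card {j. {i,j}\<in>E}"
    by (simp add: card_image)
  then show ?thesis unfolding degree_def
    by (simp add: sum.If_cases)
qed

lemma lap_mult:
  fixes El Eq :: "('n::finite) set set"
  assumes "hybrid_graph El Eq"
  shows "(hybrid_laplacian El Eq *v x)$i =
     (\<Sum>j\<in>UNIV. (if {i,j}\<in>El then x$i - x$j else 0) + (if {i,j}\<in>Eq then x$i + x$j else 0))"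
proof -
  have dl: "degree El i = (\<Sum>j\<in>UNIV. if {i,j}\<in>El then 1 else 0)"
    using assms deg_sum[of El] unfolding hybrid_graph_def by auto
  have dq: "degree Eq i = (\<Sum>j\<in>UNIV. if {i,j}\<in>Eq then 1 else 0)"
    using assms deg_sum[of Eq] unfolding hybrid_graph_def by auto
  have "(hybrid_laplacian El Eq *v x)$i = (\<Sum>j\<in>UNIV.
       ((if i = j then degree El i + degree Eq i else 0) - (if {i,j}\<in>El then 1 else 0)
        + (if {i,j}\<in>Eq then 1 else 0)) * x$j)"
    unfolding hybrid_laplacian_def lap_def signless_lap_def deg_mat_def adj_mat_def
      matrix_vector_mult_def
    by (auto intro!: sum.cong simp: algebra_simps)
  also have "\<dots> = (degree El i + degree Eq i) * x$i - (\<Sum>j\<in>UNIV. (if {i,j}\<in>El then x$j else 0))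
        + (\<Sum>j\<in>UNIV. (if {i,j}\<in>Eq then x$j else 0))"
  proof -
    have "\<And>j. ((if i = j then degree El i + degree Eq i else 0) - (if {i,j}\<in>El then 1 else 0)
        + (if {i,j}\<in>Eq then 1 else 0)) * x$j = (if i = j then (degree El i + degree Eq i) * x$i else 0)
         - (if {i,j}\<in>El then x$j else 0) + (if {i,j}\<in>Eq then x$j else 0)"
      by (auto simp: algebra_simps)
    then show ?thesis by (simp only: sum.distrib sum_subtractf sum.delta) simp
  qed
  also have "\<dots> = (\<Sum>j\<in>UNIV. (if {i,j}\<in>El then x$i - x$j else 0) + (if {i,j}\<in>Eq then x$i + x$j else 0))"
  proof -
    have "(degree El i + degree Eq i) * x$i = (\<Sum>j\<in>UNIV. (if {i,j}\<in>El then x$i else 0)) + (\<Sum>j\<in>UNIV. (if {i,j}\<in>Eq then x$i else 0))"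
      unfolding dl dq by (simp add: distrib_right sum_distrib_right; intro arg_cong2[where f="(+)"] sum.cong; simp)
    moreover have "\<And>j. (if {i,j}\<in>El then x$i - x$j else 0) + (if {i,j}\<in>Eq then x$i + x$j else 0)
       = (if {i,j}\<in>El then x$i else 0) - (if {i,j}\<in>El then x$j else 0) + ((if {i,j}\<in>Eq then x$i else 0) + (if {i,j}\<in>Eq then x$j else 0))"
      by auto
    ultimately show ?thesis by (simp only: sum.distrib sum_subtractf)
  qed
  finally show ?thesis .
qed
lemma quad_zero:
  fixes A :: "'n::finite \<Rightarrow> 'n \<Rightarrow> bool" and y :: "'n \<Rightarrow> real"
  assumes sym: "\<And>i j. A i j = A j i"
    and z: "\<And>i. (\<Sum>j\<in>UNIV. if A i j then y i - y j else 0) = 0"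
    and a: "A i j"
  shows "y i = y j"
proof -
  have S1: "(\<Sum>i\<in>UNIV. \<Sum>j\<in>UNIV. if A i j then y i * (y i - y j) else 0) = 0"
  proof -
    have "\<And>i. (\<Sum>j\<in>UNIV. if A i j then y i * (y i - y j) else 0) = y i * (\<Sum>j\<in>UNIV. if A i j then y i - y j else 0)"
      by (simp add: sum_distrib_left if_distrib cong: if_cong)
    then show ?thesis using z by simp
  qed
  have S2: "(\<Sum>i\<in>UNIV. \<Sum>j\<in>UNIV. if A i j then y j * (y j - y i) else 0) = 0"
    using S1 sum.swap[of "\<lambda>i j. if A i j then y j * (y j - y i) else 0" UNIV UNIV] sym by simp
  have "(\<Sum>i\<in>UNIV. \<Sum>j\<in>UNIV. if A i j then (y i - y j)^2 else 0)
      = (\<Sum>i\<in>UNIV. \<Sum>j\<in>UNIV. if A i j then y i * (y i - y j) else 0)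
        + (\<Sum>i\<in>UNIV. \<Sum>j\<in>UNIV. if A i j then y j * (y j - y i) else 0)"
    by (simp add: sum.distrib[symmetric] power2_eq_square algebra_simps cong: if_cong; intro sum.cong; auto simp: algebra_simps)
  then have tot: "(\<Sum>i\<in>UNIV. \<Sum>j\<in>UNIV. if A i j then (y i - y j)^2 else 0) = 0"
    using S1 S2 by simp
  have "(\<Sum>j\<in>UNIV. if A i j then (y i - y j)^2 else 0) = 0"
    using tot by (subst (asm) sum_nonneg_eq_0_iff) (auto intro!: sum_nonneg)
  then have "(if A i j then (y i - y j)^2 else 0) = 0"
    by (subst (asm) sum_nonneg_eq_0_iff) auto
  then show ?thesis using a by simp
qed
theorem lemmaD1:
  fixes El Eq :: "('n::finite) set set"
  assumes "hybrid_graph El Eq"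
    and "NOI_graph El Eq \<or> COI_graph El Eq"
  shows "\<exists>v :: 'n set \<Rightarrow> real^'n.
           (\<forall>C \<in> components El Eq.
              (\<forall>i. v C $ i \<in> {-1, 0, 1}) \<and> (\<forall>i. i \<notin> C \<longrightarrow> v C $ i = 0)) \<and>
           inj_on v (components El Eq) \<and>
           independent (v ` components El Eq) \<and>
           span (v ` components El Eq) = null_space (hybrid_laplacian El Eq)"
proof -
  have hg: "\<forall>e\<in>El \<union> Eq. card e = 2" using assms(1) unfolding hybrid_graph_def .
  have "COI_graph El Eq"
  proof (cases "COI_graph El Eq")
    case False
    then have N: "NOI_graph El Eq" using assms(2) by blast
    then obtain P1 where bp: "bipartition Eq P1" and no: "\<not> (\<exists>v eq el. eq \<in> Eq \<and> el \<in> El \<and> v \<in> eq \<and> v \<in> el)"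
      unfolding NOI_graph_def bipartite_def by blast
    have "bipartition Eq (P1 \<union> \<Union>El)"
      unfolding bipartition_def
    proof
      fix e assume e: "e \<in> Eq"
      then obtain x y where "e = {x,y}" "x \<in> P1" "y \<notin> P1" using bp unfolding bipartition_def by blast
      moreover have "y \<notin> \<Union>El" using no e \<open>e = {x,y}\<close> by blast
      ultimately show "\<exists>x y. e = {x, y} \<and> x \<in> P1 \<union> \<Union> El \<and> y \<notin> P1 \<union> \<Union> El" by blast
    qed
    then show ?thesis unfolding COI_graph_def by blast
  qed
  then obtain P1 where bp: "bipartition Eq P1" and lin: "\<forall>e \<in> El. e \<subseteq> P1 \<or> e \<subseteq> - P1"
    unfolding COI_graph_def by blast
  define s where "s i = (if i \<in> P1 then 1 else -1::real)" for i
  have ss: "s i * s i = 1" for i by (simp add: s_def)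
  have sne: "s i \<noteq> 0" for i by (simp add: s_def)
  have ss2: "s i * (s i * z) = z" for i z by (simp add: s_def)
  define A where "A i j = ({i,j} \<in> El \<union> Eq)" for i j
  have Asym: "A i j = A j i" for i j by (simp add: A_def insert_commute)
  define M where "M = hybrid_laplacian El Eq"
  have elq: "s j = s i" "{i,j} \<notin> Eq" if "{i,j} \<in> El" for i j
  proof -
    have "{i,j} \<subseteq> P1 \<or> {i,j} \<subseteq> - P1" using bspec[OF lin that] .
    then have iff: "i \<in> P1 \<longleftrightarrow> j \<in> P1" by blast
    then show "s j = s i" by (simp add: s_def)
    show "{i,j} \<notin> Eq"
    proof
      assume "{i,j} \<in> Eq"
      from bspec[OF bp[unfolded bipartition_def] this] obtain a b where ab: "{i,j} = {a,b}" "a \<in> P1" "b \<notin> P1" by (elim exE conjE)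
      then have "(i = a \<and> j = b) \<or> (i = b \<and> j = a)" by (simp add: doubleton_eq_iff)
      then show False using ab(2,3) iff by (elim disjE conjE) simp_all
    qed
  qed
  have eqq: "s j = - s i" if "{i,j} \<in> Eq" for i j
  proof -
    from bspec[OF bp[unfolded bipartition_def] that] obtain a b where ab: "{i,j} = {a,b}" "a \<in> P1" "b \<notin> P1" by (elim exE conjE)
    then have "(i = a \<and> j = b) \<or> (i = b \<and> j = a)" by (simp add: doubleton_eq_iff)
    then show ?thesis using ab(2,3) by (auto simp: s_def)
  qed
  have key: "(M *v x)$i = s i * (\<Sum>j\<in>UNIV. if A i j then s i * x$i - s j * x$j else 0)" for x i
  proof -
    have "\<And>j. (if {i,j}\<in>El then x$i - x$j else 0) + (if {i,j}\<in>Eq then x$i + x$j else 0)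
        = s i * (if A i j then s i * x$i - s j * x$j else 0)"
    proof -
      fix j
      show "(if {i,j}\<in>El then x$i - x$j else 0) + (if {i,j}\<in>Eq then x$i + x$j else 0)
        = s i * (if A i j then s i * x$i - s j * x$j else 0)"
      proof (cases "{i,j} \<in> El")
        case True
        then show ?thesis using elq[OF True] by (simp add: A_def algebra_simps ss2)
      next
        case False
        then show ?thesis using eqq[of i j] by (auto simp: A_def algebra_simps ss2)
      qed
    qed
    then show ?thesis unfolding M_def lap_mult[OF assms(1)] by (simp add: sum_distrib_left)
  qed
  define R where "R = connected_rel El Eq"
  have AR: "(i,j) \<in> R" if "A i j" for i j
    using that unfolding R_def connected_rel_def A_def by blast
  have Rconst: "y i = y j" if "(i,j) \<in> R" "\<And>a b. A a b \<Longrightarrow> y a = y b" for i j and y :: "'n \<Rightarrow> 'b"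
    using that(1) unfolding R_def connected_rel_def
  proof (induction rule: rtrancl_induct)
    case base then show ?case by simp
  next
    case (step b c)
    then obtain e where e: "e \<in> El \<union> Eq" "b \<in> e" "c \<in> e" by blast
    then obtain p q where "e = {p,q}" using hg card_2_iff by metis
    then have "b = c \<or> A b c" using e by (auto simp: A_def insert_commute)
    then show ?case using step that(2) by metis
  qed
  have eqv: "equiv UNIV R"
  proof -
    have "sym {(x, y). \<exists>e \<in> El \<union> Eq. x \<in> e \<and> y \<in> e}" by (auto simp: sym_def)
    then show ?thesis unfolding R_def connected_rel_def
      by (simp add: equiv_def refl_rtrancl sym_rtrancl trans_rtrancl)
  qed
  have comps: "components El Eq = UNIV // R" unfolding components_def R_def ..
  define v where "v C = (\<chi> j. if j \<in> C then s j else 0)" for C :: "'n set"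
  have memC: "C = R `` {i}" if C: "C \<in> components El Eq" and iC: "i \<in> C" for C i
  proof -
    obtain a where a: "C = R `` {a}" using C unfolding comps by (auto elim: quotientE)
    then have "(a,i) \<in> R" using iC by simp
    then show ?thesis using a equiv_class_eq[OF eqv] by simp
  qed
  have Cne: "C \<noteq> {}" if "C \<in> components El Eq" for C
    using that unfolding comps by (rule in_quotient_imp_non_empty[OF eqv])
  have Ri: "R `` {i} \<in> components El Eq" for i
    unfolding comps by (rule quotientI) simp
  have Rself: "i \<in> R `` {i}" for i using equiv_class_self[OF eqv] by simp
  have Rcl: "j \<in> C \<longleftrightarrow> i \<in> C" if "C \<in> components El Eq" "(i,j) \<in> R" for C i j
  proof -
    have "R `` {i} = R `` {j}" using equiv_class_eq[OF eqv that(2)] .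
    then show ?thesis using memC[OF that(1)] Rself by metis
  qed
  show ?thesis
  proof (intro exI[of _ v] conjI ballI allI impI)
    fix C i assume "C \<in> components El Eq"
    show "v C $ i \<in> {-1, 0, 1}" by (simp add: v_def s_def)
  next
    fix C i assume "C \<in> components El Eq" "i \<notin> C"
    then show "v C $ i = 0" by (simp add: v_def)
  next
    show "inj_on v (components El Eq)"
    proof (rule inj_onI)
      fix C D assume C: "C \<in> components El Eq" and D: "D \<in> components El Eq" and vv: "v C = v D"
      obtain i where i: "i \<in> C" using Cne[OF C] by blast
      have "v C $ i \<noteq> 0" using i sne by (simp add: v_def)
      moreover have "v C $ i = v D $ i" using vv by simp
      ultimately have "i \<in> D" by (simp add: v_def split: if_splits)
      then show "C = D" using memC[OF C i] memC[OF D] by simp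
    qed
  next
    show "independent (v ` components El Eq)"
    proof (rule pairwise_orthogonal_independent)
      show "pairwise orthogonal (v ` components El Eq)"
      proof (clarsimp simp: pairwise_def)
        fix C D assume C: "C \<in> components El Eq" and D: "D \<in> components El Eq" and ne: "v C \<noteq> v D"
        have "C \<inter> D = {}"
        proof (rule ccontr)
          assume "C \<inter> D \<noteq> {}"
          then obtain i where "i \<in> C" "i \<in> D" by blast
          then have "C = D" using memC C D by metis
          then show False using ne by simp
        qed
        then have "\<And>j. (v C $ j) * (v D $ j) = 0" by (auto simp: v_def)
        then have "(\<Sum>j\<in>UNIV. v C $ j * v D $ j) = 0" by (intro sum.neutral) blast
        then show "orthogonal (v C) (v D)" by (simp add: orthogonal_def inner_vec_def)
      qed
      show "0 \<notin> v ` components El Eq"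
      proof
        assume "0 \<in> v ` components El Eq"
        then obtain C where C: "C \<in> components El Eq" "v C = 0" by (metis imageE)
        obtain i where i: "i \<in> C" using Cne[OF C(1)] by blast
        have "v C $ i \<noteq> 0" using i sne by (simp add: v_def)
        then show False using C by simp
      qed
    qed
  next
    have sub: "subspace (null_space M)"
      unfolding null_space_def by (rule linear_subspace_kernel[OF matrix_vector_mul_linear])
    have vin: "v C \<in> null_space M" if C: "C \<in> components El Eq" for C
    proof -
      have "(M *v v C) $ i = 0" for i
      proof -
        have "(if A i j then s i * v C $ i - s j * v C $ j else 0) = 0" for j
        proof (cases "A i j")
          case True
          then have "j \<in> C \<longleftrightarrow> i \<in> C" using Rcl[OF C AR] by blast
          then show ?thesis using ss[of i] ss[of j] True by (auto simp: v_def)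
        qed simp
        then show ?thesis unfolding key by simp
      qed
      then show ?thesis unfolding null_space_def by (simp add: vec_eq_iff)
    qed
    have "span (v ` components El Eq) \<subseteq> null_space M"
      using sub vin by (intro span_minimal) auto
    moreover have "null_space M \<subseteq> span (v ` components El Eq)"
    proof
      fix x assume x: "x \<in> null_space M"
      define y where "y j = s j * x$j" for j
      have z: "(\<Sum>j\<in>UNIV. if A i j then y i - y j else 0) = 0" for i
      proof -
        have "(M *v x) $ i = 0" using x unfolding null_space_def by simp
        then show ?thesis unfolding key y_def using sne[of i] by simp
      qed
      have yR: "y i = y j" if "(i,j) \<in> R" for i j
        using Rconst[OF that] quad_zero[of A, OF Asym z] by blast
      define c where "c C = y (SOME j. j \<in> C)" for C
      have "x = (\<Sum>C\<in>components El Eq. c C *\<^sub>R v C)"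
      proof (subst vec_eq_iff, intro allI)
        fix i
        have "(\<Sum>C\<in>components El Eq. c C *\<^sub>R v C) $ i = (\<Sum>C\<in>components El Eq. if C = R``{i} then c C * s i else 0)"
          unfolding sum_component
        proof (intro sum.cong refl)
          fix C assume C: "C \<in> components El Eq"
          have "i \<in> C \<longleftrightarrow> C = R``{i}" using memC[OF C] Rself by blast
          then show "(c C *\<^sub>R v C) $ i = (if C = R``{i} then c C * s i else 0)"
            by (auto simp: v_def)
        qed
        also have "\<dots> = c (R``{i}) * s i"
          using Ri by (simp add: sum.delta)
        also have "c (R``{i}) = y i"
        proof -
          have "(SOME j. j \<in> R``{i}) \<in> R``{i}" using Rself by (meson someI)
          then show ?thesis unfolding c_def using yR by (metis Image_singleton_iff)
        qed
        finally show "x $ i = (\<Sum>C\<in>components El Eq. c C *\<^sub>R v C) $ i"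
          using ss[of i] by (simp add: y_def algebra_simps)
      qed
      also have "\<dots> \<in> span (v ` components El Eq)"
        by (intro span_sum span_scale span_base) auto
      finally show "x \<in> span (v ` components El Eq)" .
    qed
    ultimately show "span (v ` components El Eq) = null_space (hybrid_laplacian El Eq)"
      unfolding M_def by blast
  qed
qed
end
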